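(* Let $\mu_1,\mu_2$ be probability measures on $[0,\infty)$ with mean $1$ such that $\Lambda_{\mu_1},\Lambda_{\mu_2}$ are finite on a neighborhood of $0$, and let $P$ be a probability measure. (1) If there is $r_0>0$ with $G_{\mu_1}(r)\ge G_{\mu_2}(r)$ for all $r\in[0,r_0]$ and $G_{\mu_1}(r)\le G_{\mu_2}(r)$ for all $r>r_0$, then $\mathcal{U}^{\mu_1}(P)\subset\mathcal{U}^{\mu_2}(P)$. (2) Let $I_2=\{\lambda>0:\int_0^\infty G_{\mu_2}(z)z^\lambda dz<\infty\}$. If $\lim_{R\to\infty}R^\lambda\int_R^\infty G_{\mu_2}(z)\,dz=0$ for all $\lambda\in I_2$, and $\int_0^rG_{\mu_2}(z)\,dz\le\int_0^rG_{\mu_1}(z)\,dz$ for all $r\ge0$, then $\mathcal{U}^{\mu_1}(P)\subset\mathcal{U}^{\mu_2}(P)$.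
   Context: For a probability measure $\mu$ on $[0,\infty)$ with mean $1$, $G_\mu(r)=\mu([r,\infty))$ for $r\ge0$ and $\Lambda_\mu(\lambda)=\log\big((\lambda+1)\int_0^\infty G_\mu(z)z^\lambda\,dz\big)$ for $\lambda\ge0$. With $\Lambda_Q^f(\lambda)=\log E_Q[e^{\lambda f}]$, and $\Lambda_\mu$ finite near $0$, $\mathcal{U}^\mu(P)=\{Q \text{ probability measure}: Q\ll P,\ \Lambda_Q^{\log(dQ/dP)}(\lambda)\le\Lambda_\mu(\lambda)\ \text{for all }\lambda>0\}$. *)

theory Defs
  imports "HOL-Probability.Probability"
begin

definition ereal_ln :: "ennreal \<Rightarrow> ereal" where
  "ereal_ln x = (if x = \<infinity> then \<infinity> else if x = 0 then -\<infinity> else ereal (ln (enn2real x)))"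

definition mean_one_prob :: "real measure \<Rightarrow> bool" where
  "mean_one_prob \<mu> \<longleftrightarrow> prob_space \<mu> \<and> sets \<mu> = sets borel \<and>
     emeasure \<mu> {..<0} = 0 \<and> integrable \<mu> (\<lambda>z. z) \<and> integral\<^sup>L \<mu> (\<lambda>z. z) = 1"

definition G :: "real measure \<Rightarrow> real \<Rightarrow> real" where
  "G \<mu> r = measure \<mu> {r..}"

definition Lambda_mu :: "real measure \<Rightarrow> real \<Rightarrow> ereal" where
  "Lambda_mu \<mu> l = ereal_ln (ennreal (l + 1) *
      (\<integral>\<^sup>+ z \<in> {0..}. ennreal (G \<mu> z * z powr l) \<partial>lborel))"

definition Lambda_Q :: "'a measure \<Rightarrow> ('a \<Rightarrow> real) \<Rightarrow> real \<Rightarrow> ereal" where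
  "Lambda_Q Q f l = ereal_ln (\<integral>\<^sup>+ x. ennreal (exp (l * f x)) \<partial>Q)"

definition U :: "real measure \<Rightarrow> 'a measure \<Rightarrow> 'a measure set" where
  "U \<mu> P = {Q. prob_space Q \<and> sets Q = sets P \<and> absolutely_continuous P Q \<and>
      (\<forall>l>0. Lambda_Q Q (\<lambda>x. ln (enn2real (RN_deriv P Q x))) l \<le> Lambda_mu \<mu> l)}"

end

theory Submission
  imports Defs
begin

lemma G_meas[measurable]:
  assumes "mean_one_prob \<mu>" shows "G \<mu> \<in> borel_measurable borel"
proof -
  interpret prob_space \<mu> using assms unfolding mean_one_prob_def by auto
  have s: "sets \<mu> = sets borel" using assms unfolding mean_one_prob_def by auto
  have "mono (\<lambda>r. - G \<mu> r)"
    unfolding mono_def G_def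
    by (auto intro!: finite_measure_mono simp: s)
  then have "(\<lambda>r. - (- G \<mu> r)) \<in> borel_measurable borel"
    by (intro borel_measurable_uminus borel_measurable_mono)
  then show ?thesis by simp
qed

lemma G_nonneg: "0 \<le> G \<mu> r" unfolding G_def by simp

lemma G_le1: assumes "mean_one_prob \<mu>" shows "G \<mu> r \<le> 1"
proof -
  interpret prob_space \<mu> using assms unfolding mean_one_prob_def by auto
  show ?thesis unfolding G_def by simp
qed

lemma ereal_ln_mono: "x \<le> y \<Longrightarrow> ereal_ln x \<le> ereal_ln y"
  unfolding ereal_ln_def
  by (auto simp: enn2real_positive_iff top.extremum_unique less_top[symmetric] zero_less_iff_neq_zero intro!: ln_mono enn2real_mono
        dest: order.trans order_antisym)

lemma G_total:
  assumes m: "mean_one_prob \<mu>"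
  shows "(\<integral>\<^sup>+ t. ennreal (G \<mu> t) * indicator {0..} t \<partial>lborel) = 1"
proof -
  interpret prob_space \<mu> using m unfolding mean_one_prob_def by auto
  have s: "sets \<mu> = sets borel" using m unfolding mean_one_prob_def by auto
  interpret pair_sigma_finite \<mu> lborel
    by (simp add: pair_sigma_finite_def lborel.sigma_finite_measure_axioms sigma_finite_measure_axioms)
  have meas: "(\<lambda>(x, t). indicator {0..x} t :: ennreal) \<in> borel_measurable (\<mu> \<Otimes>\<^sub>M lborel)"
  proof -
    have "(\<lambda>(x::real, t::real). indicator {0..x} t :: ennreal) \<in> borel_measurable (borel \<Otimes>\<^sub>M borel)"
      unfolding indicator_def atLeastAtMost_iff mem_Collect_eq by measurable
    then show ?thesis
      by (subst measurable_cong_sets[OF sets_pair_measure_cong[OF s sets_lborel] refl])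
  qed
  have "(\<integral>\<^sup>+ t. ennreal (G \<mu> t) * indicator {0..} t \<partial>lborel)
      = (\<integral>\<^sup>+ t. (\<integral>\<^sup>+ x. indicator {0..x} t \<partial>\<mu>) \<partial>lborel)"
  proof (rule nn_integral_cong)
    fix t :: real
    have "ennreal (G \<mu> t) * indicator {0..} t = emeasure \<mu> {t..} * indicator {0..} t"
      unfolding G_def by (simp add: emeasure_eq_measure)
    also have "\<dots> = (\<integral>\<^sup>+ x. indicator {t..} x \<partial>\<mu>) * indicator {0..} t"
      by (subst nn_integral_indicator) (auto simp: s)
    also have "\<dots> = (\<integral>\<^sup>+ x. indicator {0..x} t \<partial>\<mu>)"
      by (subst nn_integral_multc[symmetric]) (auto simp: s indicator_def intro!: nn_integral_cong borel_measurable_indicator)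
    finally show "ennreal (G \<mu> t) * indicator {0..} t = (\<integral>\<^sup>+ x. indicator {0..x} t \<partial>\<mu>)" .
  qed
  also have "\<dots> = (\<integral>\<^sup>+ x. (\<integral>\<^sup>+ t. indicator {0..x} t \<partial>lborel) \<partial>\<mu>)"
    using Fubini'[OF meas] by simp
  also have "\<dots> = (\<integral>\<^sup>+ x. ennreal x \<partial>\<mu>)"
  proof (intro nn_integral_cong)
    fix x :: real
    show "(\<integral>\<^sup>+ t. indicator {0..x} t \<partial>lborel) = ennreal x"
      by (cases "0 \<le> x") (auto simp: ennreal_neg)
  qed
  also have "\<dots> = ennreal (integral\<^sup>L \<mu> (\<lambda>x. x))"
  proof (rule nn_integral_eq_integral)
    show "integrable \<mu> (\<lambda>x. x)" using m unfolding mean_one_prob_def by auto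
    have "emeasure \<mu> {..<0} = 0" using m unfolding mean_one_prob_def by auto
    then show "AE x in \<mu>. 0 \<le> x"
      by (intro AE_I[of _ _ "{..<0}"]) (auto simp: s)
  qed
  also have "\<dots> = 1" using m unfolding mean_one_prob_def by auto
  finally show ?thesis .
qed

definition H :: "real measure \<Rightarrow> real \<Rightarrow> ennreal" where
  "H \<mu> r = (\<integral>\<^sup>+ t. ennreal (G \<mu> t) * indicator {r<..} t \<partial>lborel)"

lemma H_eq:
  assumes m: "mean_one_prob \<mu>" and r: "0 \<le> r"
  shows "H \<mu> r = ennreal (1 - (LINT z:{0..r}|lborel. G \<mu> z))"
proof -
  define A where "A = (\<integral>\<^sup>+ t. ennreal (G \<mu> t) * indicator {0..r} t \<partial>lborel)"
  have sum: "A + H \<mu> r = 1"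
  proof -
    have "A + H \<mu> r = (\<integral>\<^sup>+ t. ennreal (G \<mu> t) * indicator {0..r} t + ennreal (G \<mu> t) * indicator {r<..} t \<partial>lborel)"
      unfolding A_def H_def using m by (subst nn_integral_add) auto
    also have "\<dots> = (\<integral>\<^sup>+ t. ennreal (G \<mu> t) * indicator {0..} t \<partial>lborel)"
      using r by (intro nn_integral_cong) (auto simp: indicator_def)
    also have "\<dots> = 1" using G_total[OF m] .
    finally show ?thesis .
  qed
  then have "A \<noteq> \<top>" by (intro notI) simp
  then obtain a where a: "A = ennreal a" "0 \<le> a" by (cases A) auto
  have "(\<integral>\<^sup>+ t. ennreal (G \<mu> t * indicator {0..r} t) \<partial>lborel) = ennreal a"
  proof -
    have "(\<integral>\<^sup>+ t. ennreal (G \<mu> t * indicator {0..r} t) \<partial>lborel) = A"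
      unfolding A_def by (intro nn_integral_cong) (simp add: indicator_def)
    then show ?thesis using a by simp
  qed
  then have "integrable lborel (\<lambda>t. G \<mu> t * indicator {0..r} t) \<and> integral\<^sup>L lborel (\<lambda>t. G \<mu> t * indicator {0..r} t) = a"
    using m a by (subst (asm) nn_integral_eq_integrable) (auto simp: G_nonneg)
  then have L: "(LINT z:{0..r}|lborel. G \<mu> z) = a"
    by (simp add: set_lebesgue_integral_def mult.commute)
  have "H \<mu> r \<noteq> \<top>" using sum by (intro notI) simp
  then obtain h where h: "H \<mu> r = ennreal h" "0 \<le> h" by (cases "H \<mu> r") auto
  have "ennreal (a + h) = 1" using sum a h by (simp add: ennreal_plus[symmetric] del: ennreal_plus)
  then have "a + h = 1" using a h by (metis ennreal_eq_1 add_nonneg_nonneg)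
  then show ?thesis using h L by simp
qed

lemma powr_inv_less_iff:
  fixes s z l :: real
  assumes "0 < l" "0 \<le> s" "0 \<le> z"
  shows "s < z powr l \<longleftrightarrow> s powr (1/l) < z"
proof
  assume "s < z powr l"
  then have "s powr (1/l) < (z powr l) powr (1/l)"
    using assms by (intro powr_less_mono2) auto
  also have "\<dots> = z" using assms by (simp add: powr_powr)
  finally show "s powr (1/l) < z" .
next
  assume "s powr (1/l) < z"
  then have "(s powr (1/l)) powr l < z powr l"
    using assms by (intro powr_less_mono2) auto
  also have "(s powr (1/l)) powr l = s" using assms by (simp add: powr_powr)
  finally show "s < z powr l" .
qed

lemma moment_H:
  assumes m: "mean_one_prob \<mu>" and l: "0 < l"
  shows "(\<integral>\<^sup>+ z \<in> {0..}. ennreal (G \<mu> z * z powr l) \<partial>lborel)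
       = (\<integral>\<^sup>+ s. H \<mu> (s powr (1/l)) * indicator {0..} s \<partial>lborel)"
proof -
  define F where "F z s = ennreal (G \<mu> z) * indicator {0..} z * (indicator {0..} s * indicator {s powr (1/l)<..} z)"
    for z s :: real
  have "(\<integral>\<^sup>+ z \<in> {0..}. ennreal (G \<mu> z * z powr l) \<partial>lborel) = (\<integral>\<^sup>+ z. (\<integral>\<^sup>+ s. F z s \<partial>lborel) \<partial>lborel)"
  proof (rule nn_integral_cong)
    fix z :: real
    show "ennreal (G \<mu> z * z powr l) * indicator {0..} z = (\<integral>\<^sup>+ s. F z s \<partial>lborel)"
    proof (cases "0 \<le> z")
      case True
      have "(\<integral>\<^sup>+ s. indicator {0..} s * indicator {s powr (1/l)<..} z \<partial>lborel)
          = (\<integral>\<^sup>+ s. indicator {0..<z powr l} s \<partial>lborel)"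
        using True l by (intro nn_integral_cong) (auto simp: indicator_def powr_inv_less_iff)
      also have "\<dots> = ennreal (z powr l)" by simp
      finally have e: "(\<integral>\<^sup>+ s. indicator {0..} s * indicator {s powr (1/l)<..} z \<partial>lborel) = ennreal (z powr l)" .
      have me: "(\<lambda>s. indicator {0..} s * indicator {s powr (1 / l)<..} z :: ennreal) \<in> borel_measurable borel"
        unfolding indicator_def atLeast_iff greaterThan_iff by measurable
      show ?thesis unfolding F_def
        by (subst nn_integral_cmult) (use True e me in \<open>auto simp: ennreal_mult G_nonneg\<close>)
    next
      case False
      then show ?thesis by (simp add: F_def)
    qed
  qed
  also have "\<dots> = (\<integral>\<^sup>+ s. (\<integral>\<^sup>+ z. F z s \<partial>lborel) \<partial>lborel)"
  proof (rule lborel_pair.Fubini'[symmetric])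
    show "case_prod F \<in> borel_measurable (lborel \<Otimes>\<^sub>M lborel)"
      unfolding F_def indicator_def atLeast_iff greaterThan_iff using m
      by measurable
  qed
  also have "\<dots> = (\<integral>\<^sup>+ s. H \<mu> (s powr (1/l)) * indicator {0..} s \<partial>lborel)"
  proof (rule nn_integral_cong)
    fix s :: real
    have "(\<integral>\<^sup>+ z. F z s \<partial>lborel) = (\<integral>\<^sup>+ z. ennreal (G \<mu> z) * indicator {s powr (1/l)<..} z * indicator {0..} s \<partial>lborel)"
      unfolding F_def
    proof (intro nn_integral_cong)
      fix z :: real
      have "0 \<le> s powr (1/l)" by simp
      then have "s powr (1/l) < z \<Longrightarrow> 0 \<le> z" by linarith
      then show "ennreal (G \<mu> z) * indicator {0..} z * (indicator {0..} s * indicator {s powr (1 / l)<..} z) =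
         ennreal (G \<mu> z) * indicator {s powr (1 / l)<..} z * indicator {0..} s"
        by (auto simp: indicator_def)
    qed
    also have "\<dots> = H \<mu> (s powr (1/l)) * indicator {0..} s"
      unfolding H_def using m by (subst nn_integral_multc) auto
    finally show "(\<integral>\<^sup>+ z. F z s \<partial>lborel) = H \<mu> (s powr (1/l)) * indicator {0..} s" .
  qed
  finally show ?thesis .
qed

lemma G_set_integrable:
  assumes m: "mean_one_prob \<mu>"
  shows "set_integrable lborel {0..r} (G \<mu>)"
  unfolding set_integrable_def
proof -
  have i: "integrable lborel (indicator {0..r} :: real \<Rightarrow> real)" by (intro integrable_real_indicator) (auto simp: emeasure_lborel_Icc_eq)
  have me: "(\<lambda>x. indicator {0..r} x *\<^sub>R G \<mu> x) \<in> borel_measurable lborel" using m by measurable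
  have "AE x in lborel. norm (indicator {0..r} x *\<^sub>R G \<mu> x) \<le> norm (indicator {0..r} x :: real)"
    using G_le1[OF m] G_nonneg[of \<mu>] by (auto simp: indicator_def)
  then show "integrable lborel (\<lambda>x. indicator {0..r} x *\<^sub>R G \<mu> x)"
    using Bochner_Integration.integrable_bound[OF i me] by blast
qed

lemma key:
  assumes m1: "mean_one_prob \<mu>1" and m2: "mean_one_prob \<mu>2"
    and HH: "\<And>r. 0 \<le> r \<Longrightarrow> H \<mu>1 r \<le> H \<mu>2 r"
  shows "U \<mu>1 P \<subseteq> U \<mu>2 P"
proof -
  have L: "Lambda_mu \<mu>1 l \<le> Lambda_mu \<mu>2 l" if l: "0 < l" for l
  proof -
    have "(\<integral>\<^sup>+ z \<in> {0..}. ennreal (G \<mu>1 z * z powr l) \<partial>lborel) \<le> (\<integral>\<^sup>+ z \<in> {0..}. ennreal (G \<mu>2 z * z powr l) \<partial>lborel)"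
      unfolding moment_H[OF m1 l] moment_H[OF m2 l]
      by (intro nn_integral_mono) (auto simp: indicator_def intro!: mult_right_mono HH)
    then show ?thesis unfolding Lambda_mu_def
      by (intro ereal_ln_mono mult_left_mono) auto
  qed
  show ?thesis unfolding U_def using L by (auto intro: order.trans)
qed

theorem mainTheorem7:
  fixes \<mu>1 \<mu>2 :: "real measure" and P :: "'a measure"
  assumes "mean_one_prob \<mu>1" and "mean_one_prob \<mu>2"
    and "\<exists>e>0. \<forall>l\<in>{0..<e}. \<bar>Lambda_mu \<mu>1 l\<bar> \<noteq> \<infinity>"
    and "\<exists>e>0. \<forall>l\<in>{0..<e}. \<bar>Lambda_mu \<mu>2 l\<bar> \<noteq> \<infinity>"
    and "prob_space P"
  shows "((\<exists>r0>0. (\<forall>r\<in>{0..r0}. G \<mu>1 r \<ge> G \<mu>2 r) \<and> (\<forall>r>r0. G \<mu>1 r \<le> G \<mu>2 r))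
            \<longrightarrow> U \<mu>1 P \<subseteq> U \<mu>2 P)
       \<and> ((\<forall>l\<in>{l. l > 0 \<and> (\<integral>\<^sup>+ z \<in> {0..}. ennreal (G \<mu>2 z * z powr l) \<partial>lborel) < \<infinity>}.
              ((\<lambda>R. R powr l * (LINT z:{R..}|lborel. G \<mu>2 z)) \<longlongrightarrow> 0) at_top)
           \<and> (\<forall>r\<ge>0. (LINT z:{0..r}|lborel. G \<mu>2 z) \<le> (LINT z:{0..r}|lborel. G \<mu>1 z))
            \<longrightarrow> U \<mu>1 P \<subseteq> U \<mu>2 P)"
proof (intro conjI impI)
  note m1 = assms(1) and m2 = assms(2)
  assume "\<exists>r0>0. (\<forall>r\<in>{0..r0}. G \<mu>1 r \<ge> G \<mu>2 r) \<and> (\<forall>r>r0. G \<mu>1 r \<le> G \<mu>2 r)"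
  then obtain r0 where r0: "r0 > 0" "\<And>r. r \<in> {0..r0} \<Longrightarrow> G \<mu>1 r \<ge> G \<mu>2 r"
    "\<And>r. r > r0 \<Longrightarrow> G \<mu>1 r \<le> G \<mu>2 r" by blast
  show "U \<mu>1 P \<subseteq> U \<mu>2 P"
  proof (rule key[OF m1 m2])
    fix r :: real assume r: "0 \<le> r"
    show "H \<mu>1 r \<le> H \<mu>2 r"
    proof (cases "r0 \<le> r")
      case True
      then show ?thesis unfolding H_def
        by (intro nn_integral_mono) (auto simp: indicator_def intro!: ennreal_leI r0(3))
    next
      case False
      have "(LINT z:{0..r}|lborel. G \<mu>2 z) \<le> (LINT z:{0..r}|lborel. G \<mu>1 z)"
        using False by (intro set_integral_mono G_set_integrable m1 m2 r0(2)) auto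
      then show ?thesis unfolding H_eq[OF m1 r] H_eq[OF m2 r]
        by (intro ennreal_leI) auto
    qed
  qed
next
  note m1 = assms(1) and m2 = assms(2)
  assume "(\<forall>l\<in>{l. l > 0 \<and> (\<integral>\<^sup>+ z \<in> {0..}. ennreal (G \<mu>2 z * z powr l) \<partial>lborel) < \<infinity>}.
              ((\<lambda>R. R powr l * (LINT z:{R..}|lborel. G \<mu>2 z)) \<longlongrightarrow> 0) at_top)
           \<and> (\<forall>r\<ge>0. (LINT z:{0..r}|lborel. G \<mu>2 z) \<le> (LINT z:{0..r}|lborel. G \<mu>1 z))"
  then have c: "\<And>r. r \<ge> 0 \<Longrightarrow> (LINT z:{0..r}|lborel. G \<mu>2 z) \<le> (LINT z:{0..r}|lborel. G \<mu>1 z)" by blast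
  show "U \<mu>1 P \<subseteq> U \<mu>2 P"
  proof (rule key[OF m1 m2])
    fix r :: real assume r: "0 \<le> r"
    show "H \<mu>1 r \<le> H \<mu>2 r" unfolding H_eq[OF m1 r] H_eq[OF m2 r]
      using c[OF r] by (intro ennreal_leI) auto
  qed
qed

end
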